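(* Let $G$ be a graph whose twin graph $G^*$ is isomorphic to $K_3$ and has at most one vertex of type (1K). Then $D(G)=n(G)-2$ if and only if $G$ is isomorphic to $K_{1,2,2}$ or to $K_{1,1,t}$ for some $t\ge 2$.
   Context: All graphs are finite and simple; $n(G)=|V(G)|$; $N_G(u)$ is the neighborhood of $u$; $K_{a,b,c}$ is the complete tripartite graph. A distinguishing coloring of a graph $G$ is a (not necessarily proper) vertex coloring such that the only automorphism of $G$ mapping every vertex to a vertex of the same color is the identity; the distinguishing number $D(G)$ is the minimum number of colors in a distinguishing coloring of $G$. Two distinct vertices $u,v$ are twins if $N_G(u)\setminus\{v\}=N_G(v)\setminus\{u\}$. The relation $u\equiv v$ iff $u=v$ or $u,v$ are twins is an equivalence relation; the class of $v$ is denoted $v^*$. The twin graph $G^*$ has the equivalence classes as vertices, distinct classes $u^*,v^*$ being adjacent iff $uv\in E(G)$. Each class induces a complete or an edgeless graph. A class $v^*$ is of type (1) if $|v^*|=1$, of type (K) if $|v^*|\ge 2$ and it induces a complete graph, and of type (N) if $|v^*|\ge2$ and it induces an edgeless graph; type (1K) means type (1) or (K), type (1N) means (1) or (N), and type (KN) means (K) or (N). *)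

theory Defs
  imports Main
begin

definition graph :: "'a set \<Rightarrow> 'a set set \<Rightarrow> bool" where
  "graph V E \<longleftrightarrow> finite V \<and> (\<forall>e\<in>E. \<exists>u v. e = {u, v} \<and> u \<in> V \<and> v \<in> V \<and> u \<noteq> v)"

definition nbhd :: "'a set \<Rightarrow> 'a set set \<Rightarrow> 'a \<Rightarrow> 'a set" where
  "nbhd V E u = {v \<in> V. {u, v} \<in> E}"

definition graph_iso :: "'a set \<Rightarrow> 'a set set \<Rightarrow> 'b set \<Rightarrow> 'b set set \<Rightarrow> bool" where
  "graph_iso V E W F \<longleftrightarrow> (\<exists>f. bij_betw f V W \<and>
      (\<forall>u\<in>V. \<forall>v\<in>V. {u, v} \<in> E \<longleftrightarrow> {f u, f v} \<in> F))"

definition automorphism :: "'a set \<Rightarrow> 'a set set \<Rightarrow> ('a \<Rightarrow> 'a) \<Rightarrow> bool" where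
  "automorphism V E f \<longleftrightarrow> bij_betw f V V \<and>
      (\<forall>u\<in>V. \<forall>v\<in>V. {u, v} \<in> E \<longleftrightarrow> {f u, f v} \<in> E)"

definition distinguishing :: "'a set \<Rightarrow> 'a set set \<Rightarrow> nat \<Rightarrow> ('a \<Rightarrow> nat) \<Rightarrow> bool" where
  "distinguishing V E k c \<longleftrightarrow> c ` V \<subseteq> {..<k} \<and>
      (\<forall>f. automorphism V E f \<and> (\<forall>v\<in>V. c (f v) = c v) \<longrightarrow> (\<forall>v\<in>V. f v = v))"

definition dist_num :: "'a set \<Rightarrow> 'a set set \<Rightarrow> nat" where
  "dist_num V E = (LEAST k. \<exists>c. distinguishing V E k c)"

definition twins :: "'a set \<Rightarrow> 'a set set \<Rightarrow> 'a \<Rightarrow> 'a \<Rightarrow> bool" where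
  "twins V E u v \<longleftrightarrow> u \<noteq> v \<and> nbhd V E u - {v} = nbhd V E v - {u}"

definition twin_class :: "'a set \<Rightarrow> 'a set set \<Rightarrow> 'a \<Rightarrow> 'a set" where
  "twin_class V E v = {u \<in> V. u = v \<or> twins V E u v}"

text \<open>The twin graph G*: vertices are the twin classes, distinct classes
  adjacent iff some (equivalently every) pair of representatives is adjacent.\<close>
definition twin_classes :: "'a set \<Rightarrow> 'a set set \<Rightarrow> 'a set set" where
  "twin_classes V E = twin_class V E ` V"

definition twin_edges :: "'a set \<Rightarrow> 'a set set \<Rightarrow> 'a set set set" where
  "twin_edges V E = {{C, D} | C D. C \<in> twin_classes V E \<and> D \<in> twin_classes V E \<and> C \<noteq> D \<and>
       (\<exists>u\<in>C. \<exists>v\<in>D. {u, v} \<in> E)}"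

definition is_clique :: "'a set set \<Rightarrow> 'a set \<Rightarrow> bool" where
  "is_clique E S \<longleftrightarrow> (\<forall>u\<in>S. \<forall>v\<in>S. u \<noteq> v \<longrightarrow> {u, v} \<in> E)"

definition type_1K :: "'a set set \<Rightarrow> 'a set \<Rightarrow> bool" where
  "type_1K E C \<longleftrightarrow> card C = 1 \<or> (card C \<ge> 2 \<and> is_clique E C)"

definition K3_V :: "nat set" where "K3_V = {0, 1, 2}"
definition K3_E :: "nat set set" where "K3_E = {{u, v} | u v. u \<in> K3_V \<and> v \<in> K3_V \<and> u \<noteq> v}"

definition tri_part :: "nat \<Rightarrow> nat \<Rightarrow> nat \<Rightarrow> nat" where
  "tri_part a b x = (if x < a then 0 else if x < a + b then 1 else 2)"

definition Ktri_V :: "nat \<Rightarrow> nat \<Rightarrow> nat \<Rightarrow> nat set" where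
  "Ktri_V a b c = {..<a + b + c}"

definition Ktri_E :: "nat \<Rightarrow> nat \<Rightarrow> nat \<Rightarrow> nat set set" where
  "Ktri_E a b c = {{u, v} | u v. u \<in> Ktri_V a b c \<and> v \<in> Ktri_V a b c \<and>
      tri_part a b u \<noteq> tri_part a b v}"

end

theory Submission
  imports Defs
begin


lemma edge_props:
  assumes "graph V E" "{u,v} \<in> E" shows "u \<noteq> v" "u \<in> V" "v \<in> V"
  using assms unfolding graph_def by (auto simp: doubleton_eq_iff)

lemma no_loop: assumes "graph V E" shows "{u} \<notin> E"
  using edge_props[OF assms, of u u] by auto

lemma nbhd_iff: "x \<in> nbhd V E u \<longleftrightarrow> x \<in> V \<and> {u,x} \<in> E"
  unfolding nbhd_def by auto

lemma twins_sym: "twins V E u v \<Longrightarrow> twins V E v u"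
  unfolding twins_def by auto

lemma twin_adj:
  assumes g: "graph V E" and t: "twins V E u w" and e: "{u,v} \<in> E" and vw: "v \<noteq> w"
  shows "{w,v} \<in> E"
proof -
  have "v \<in> nbhd V E u - {w}" using e vw edge_props[OF g e] by (auto simp: nbhd_iff)
  hence "v \<in> nbhd V E w - {u}" using t unfolding twins_def by auto
  thus ?thesis by (auto simp: nbhd_iff)
qed

lemma twins_trans:
  assumes g: "graph V E" and uv: "twins V E u v" and vw: "twins V E v w" and uw: "u \<noteq> w"
  shows "twins V E u w"
proof -
  have A: "nbhd V E u - {v} = nbhd V E v - {u}" "nbhd V E v - {w} = nbhd V E w - {v}"
    using uv vw unfolding twins_def by auto
  have sub: "nbhd V E u - {w} \<subseteq> nbhd V E w - {u}"
    if A1: "nbhd V E u - {v} = nbhd V E v - {u}" and A2: "nbhd V E v - {w} = nbhd V E w - {v}"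
       and uw: "u \<noteq> w" and uv: "u \<noteq> v" and vw: "v \<noteq> w" for u v w
  proof
    fix x assume x: "x \<in> nbhd V E u - {w}"
    hence xu: "x \<noteq> u" using no_loop[OF g] by (auto simp: nbhd_iff)
    show "x \<in> nbhd V E w - {u}"
    proof (cases "x = v")
      case False
      hence "x \<in> nbhd V E v - {w}" using x xu A1 by blast
      thus ?thesis using A2 False xu by blast
    next
      case True
      hence "{u,v} \<in> E" using x by (auto simp: nbhd_iff)
      hence "u \<in> nbhd V E v - {w}" using edge_props[OF g] uw by (auto simp: nbhd_iff insert_commute)
      hence "u \<in> nbhd V E w" using A2 uv by blast
      hence "w \<in> nbhd V E u - {v}" using edge_props[OF g] vw by (auto simp: nbhd_iff insert_commute)
      hence "w \<in> nbhd V E v" using A1 by blast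
      hence "{v,w} \<in> E" by (auto simp: nbhd_iff)
      hence "{w,v} \<in> E" "v \<in> V" using edge_props[OF g] by (auto simp: insert_commute)
      thus ?thesis using True uv by (auto simp: nbhd_iff)
    qed
  qed
  have d: "u \<noteq> v" "v \<noteq> w" using uv vw unfolding twins_def by auto
  show ?thesis unfolding twins_def
    using sub[OF A(1) A(2) uw d] sub[OF A(2)[symmetric] A(1)[symmetric] uw[symmetric] d(2)[symmetric] d(1)[symmetric]] uw
    by blast
qed

lemma twin_class_eq:
  assumes g: "graph V E" and u: "u \<in> twin_class V E v"
  shows "twin_class V E u = twin_class V E v"
proof -
  have uV: "u \<in> V" using u unfolding twin_class_def by auto
  show ?thesis
  proof (cases "u = v")
    case True thus ?thesis by simp
  next
    case False
    hence t: "twins V E u v" using u unfolding twin_class_def by auto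
    have 1: "twins V E x v" if "twins V E x u" "x \<noteq> v" for x
      using twins_trans[OF g that(1) t that(2)] .
    have 2: "twins V E x u" if "twins V E x v" "x \<noteq> u" for x
      using twins_trans[OF g that(1) twins_sym[OF t] that(2)] .
    show ?thesis unfolding twin_class_def
      using 1 2 twins_sym[OF t] t uV by blast
  qed
qed

lemma in_twin_class: "v \<in> V \<Longrightarrow> v \<in> twin_class V E v"
  unfolding twin_class_def by auto

lemma same_class_twins:
  assumes g: "graph V E" and "u \<in> twin_class V E w" "x \<in> twin_class V E w" "u \<noteq> x"
  shows "twins V E u x"
proof -
  have "u = w \<or> twins V E u w" "x = w \<or> twins V E x w" using assms(2,3) unfolding twin_class_def by auto
  thus ?thesis using assms(4) twins_trans[OF g, of u w x] twins_sym[of V E x w] twins_sym[of V E u w] by blast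
qed

lemma aut_nbhd:
  assumes a: "automorphism V E f" and u: "u \<in> V"
  shows "nbhd V E (f u) = f ` nbhd V E u"
proof -
  have b: "bij_betw f V V" and e: "\<forall>u\<in>V. \<forall>v\<in>V. {u, v} \<in> E \<longleftrightarrow> {f u, f v} \<in> E"
    using a unfolding automorphism_def by auto
  show ?thesis
  proof
    show "nbhd V E (f u) \<subseteq> f ` nbhd V E u"
    proof
      fix x assume "x \<in> nbhd V E (f u)"
      hence x: "x \<in> V" "{f u, x} \<in> E" by (auto simp: nbhd_iff)
      then obtain y where y: "y \<in> V" "x = f y" using b unfolding bij_betw_def by auto
      thus "x \<in> f ` nbhd V E u" using x e u by (auto simp: nbhd_iff)
    qed
    have fV: "\<forall>x\<in>V. f x \<in> V" using b unfolding bij_betw_def by auto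
    show "f ` nbhd V E u \<subseteq> nbhd V E (f u)"
      using e u fV by (auto simp: nbhd_iff)
  qed
qed

lemma aut_twins:
  assumes a: "automorphism V E f" and u: "u \<in> V" and v: "v \<in> V"
  shows "twins V E (f u) (f v) \<longleftrightarrow> twins V E u v"
proof -
  have b: "bij_betw f V V" using a unfolding automorphism_def by auto
  hence inj: "inj_on f V" by (auto simp: bij_betw_def)
  have sub: "nbhd V E w \<subseteq> V" for w by (auto simp: nbhd_iff)
  have ne: "f u \<noteq> f v \<longleftrightarrow> u \<noteq> v" using inj u v by (auto dest: inj_onD)
  have d1: "f ` (nbhd V E u - {v}) = f ` nbhd V E u - f ` {v}"
    by (rule inj_on_image_set_diff[OF inj]) (use sub[of u] v in auto)
  have d2: "f ` (nbhd V E v - {u}) = f ` nbhd V E v - f ` {u}"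
    by (rule inj_on_image_set_diff[OF inj]) (use sub[of v] u in auto)
  have im: "nbhd V E (f u) - {f v} = f ` (nbhd V E u - {v})"
       "nbhd V E (f v) - {f u} = f ` (nbhd V E v - {u})"
    using aut_nbhd[OF a u] aut_nbhd[OF a v] d1 d2 by auto
  show ?thesis unfolding twins_def im ne
    using inj_on_image_eq_iff[OF inj, of "nbhd V E u - {v}" "nbhd V E v - {u}"] sub by blast
qed

lemma aut_class:
  assumes a: "automorphism V E f" and v: "v \<in> V"
  shows "twin_class V E (f v) = f ` twin_class V E v"
proof -
  have b: "bij_betw f V V" using a unfolding automorphism_def by auto
  hence inj: "inj_on f V" and im: "f ` V = V" by (auto simp: bij_betw_def)
  show ?thesis
  proof
    show "twin_class V E (f v) \<subseteq> f ` twin_class V E v"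
    proof
      fix x assume x: "x \<in> twin_class V E (f v)"
      hence "x \<in> V" unfolding twin_class_def by auto
      then obtain y where y: "y \<in> V" "x = f y" using im by auto
      have "y = v \<or> twins V E y v" using x y aut_twins[OF a y(1) v] unfolding twin_class_def
        using inj v by (auto dest: inj_onD)
      thus "x \<in> f ` twin_class V E v" using y unfolding twin_class_def by auto
    qed
    show "f ` twin_class V E v \<subseteq> twin_class V E (f v)"
      using aut_twins[OF a _ v] im unfolding twin_class_def by auto
  qed
qed

lemma GL:
  assumes g: "graph V E" and cV: "c ` V \<subseteq> {..<k}"
    and inj: "\<forall>X\<in>twin_classes V E. inj_on c X"
    and dif: "\<forall>X\<in>twin_classes V E. \<forall>Y\<in>twin_classes V E. c ` X = c ` Y \<longrightarrow> X = Y"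
  shows "distinguishing V E k c"
  unfolding distinguishing_def
proof (intro conjI cV allI impI ballI)
  fix f v assume H: "automorphism V E f \<and> (\<forall>v\<in>V. c (f v) = c v)" and v: "v \<in> V"
  have b: "bij_betw f V V" using H unfolding automorphism_def by auto
  hence fv: "f v \<in> V" using v by (auto simp: bij_betw_def)
  have "c ` twin_class V E (f v) = c ` twin_class V E v"
    unfolding aut_class[OF conjunct1[OF H] v] image_image
    using H unfolding twin_class_def by (auto intro!: image_cong)
  hence eq: "twin_class V E (f v) = twin_class V E v"
    using dif fv v unfolding twin_classes_def by blast
  have "f v \<in> twin_class V E v" using in_twin_class[OF fv] eq by auto
  moreover have "v \<in> twin_class V E v" using in_twin_class[OF v] .
  moreover have "c (f v) = c v" using H v by auto
  ultimately show "f v = v" using inj v unfolding twin_classes_def by (auto dest: inj_onD)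
qed


lemma class_of_mem:
  assumes g: "graph V E" and X: "X \<in> twin_classes V E" and w: "w \<in> X"
  shows "X = twin_class V E w"
proof -
  obtain v where v: "v \<in> V" "X = twin_class V E v" using X unfolding twin_classes_def by auto
  show ?thesis using twin_class_eq[OF g, of w v] w v by auto
qed

lemma class_sub: "X \<in> twin_classes V E \<Longrightarrow> X \<subseteq> V"
  unfolding twin_classes_def twin_class_def by auto

lemma class_ne: "X \<in> twin_classes V E \<Longrightarrow> X \<noteq> {}"
  unfolding twin_classes_def using in_twin_class by fastforce

lemma class_twins:
  assumes g: "graph V E" and X: "X \<in> twin_classes V E" and "u \<in> X" "x \<in> X" "u \<noteq> x"
  shows "twins V E u x"
proof -
  have "X = twin_class V E u" using class_of_mem[OF g X assms(3)] .
  thus ?thesis using same_class_twins[OF g, of u u x] assms(3-5) by simp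
qed

lemma class_dich:
  assumes g: "graph V E" and X: "X \<in> twin_classes V E" and u: "u \<in> X" and v: "v \<in> X"
    and e: "{u,v} \<in> E"
  shows "is_clique E X"
proof -
  have s1: "{x,v} \<in> E" if x: "x \<in> X" "x \<noteq> v" for x
  proof (cases "x = u")
    case True thus ?thesis using e by simp
  next
    case False
    show ?thesis using twin_adj[OF g class_twins[OF g X u x(1) False[symmetric]] e x(2)[symmetric]] .
  qed
  show ?thesis unfolding is_clique_def
  proof (intro ballI impI)
    fix x y assume xy: "x \<in> X" "y \<in> X" "x \<noteq> y"
    show "{x,y} \<in> E"
    proof (cases "y = v")
      case True thus ?thesis using s1[OF xy(1)] xy by simp
    next
      case yv: False
      show ?thesis
      proof (cases "x = v")
        case True thus ?thesis using s1[OF xy(2) yv] by (simp add: insert_commute)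
      next
        case False
        have "{v,x} \<in> E" using s1[OF xy(1) False] by (simp add: insert_commute)
        from twin_adj[OF g class_twins[OF g X v xy(2)] this] xy yv
        show ?thesis by (simp add: insert_commute)
      qed
    qed
  qed
qed

lemma class_cross:
  assumes g: "graph V E" and X: "X \<in> twin_classes V E" and Y: "Y \<in> twin_classes V E"
    and XY: "X \<noteq> Y" and ex: "\<exists>u\<in>X. \<exists>v\<in>Y. {u,v} \<in> E"
  shows "\<forall>u\<in>X. \<forall>v\<in>Y. {u,v} \<in> E"
proof (intro ballI)
  fix u v assume uv: "u \<in> X" "v \<in> Y"
  obtain u0 v0 where 0: "u0 \<in> X" "v0 \<in> Y" "{u0,v0} \<in> E" using ex by auto
  have disj: "x \<noteq> y" if "x \<in> X" "y \<in> Y" for x y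
    using class_of_mem[OF g X that(1)] class_of_mem[OF g Y] that XY by metis
  have 1: "{u,v0} \<in> E"
  proof (cases "u = u0")
    case True thus ?thesis using 0 by simp
  next
    case False
    show ?thesis using twin_adj[OF g class_twins[OF g X 0(1) uv(1)] 0(3)] False disj[OF uv(1) 0(2)] by auto
  qed
  show "{u,v} \<in> E"
  proof (cases "v = v0")
    case True thus ?thesis using 1 by simp
  next
    case False
    have "{v0,u} \<in> E" using 1 by (simp add: insert_commute)
    from twin_adj[OF g class_twins[OF g Y 0(2) uv(2) False[symmetric]] this] disj[OF uv(1) uv(2)]
    show ?thesis by (simp add: insert_commute)
  qed
qed

locale K3 =
  fixes V :: "'a set" and E :: "'a set set" and X0 X1 X2 :: "'a set"
  assumes g: "graph V E"
    and T: "twin_classes V E = {X0,X1,X2}"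
    and d01: "X0 \<noteq> X1" and d02: "X0 \<noteq> X2" and d12: "X1 \<noteq> X2"
    and e01: "\<exists>u\<in>X0. \<exists>v\<in>X1. {u,v} \<in> E"
    and e02: "\<exists>u\<in>X0. \<exists>v\<in>X2. {u,v} \<in> E"
    and e12: "\<exists>u\<in>X1. \<exists>v\<in>X2. {u,v} \<in> E"
    and n1: "\<not> type_1K E X1" and n2: "\<not> type_1K E X2"
begin

lemma inT: "X0 \<in> twin_classes V E" "X1 \<in> twin_classes V E" "X2 \<in> twin_classes V E"
  using T by auto

lemma finV: "finite V" using g unfolding graph_def by auto

lemma sub: "X0 \<subseteq> V" "X1 \<subseteq> V" "X2 \<subseteq> V" using class_sub inT by auto

lemma fin: "finite X0" "finite X1" "finite X2"
  using finite_subset[OF sub(1) finV] finite_subset[OF sub(2) finV] finite_subset[OF sub(3) finV] by auto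

lemma ne: "X0 \<noteq> {}" "X1 \<noteq> {}" "X2 \<noteq> {}" using class_ne inT by auto

lemma Vun: "V = X0 \<union> X1 \<union> X2"
proof
  show "V \<subseteq> X0 \<union> X1 \<union> X2"
  proof
    fix v assume "v \<in> V"
    hence "twin_class V E v \<in> {X0,X1,X2}" using T unfolding twin_classes_def by auto
    thus "v \<in> X0 \<union> X1 \<union> X2" using in_twin_class[OF \<open>v \<in> V\<close>] by auto
  qed
  show "X0 \<union> X1 \<union> X2 \<subseteq> V" using sub by auto
qed

lemma disj_gen: "X \<in> twin_classes V E \<Longrightarrow> Y \<in> twin_classes V E \<Longrightarrow> w \<in> X \<Longrightarrow> w \<in> Y \<Longrightarrow> X = Y"
  using class_of_mem[OF g, of X w] class_of_mem[OF g, of Y w] by simp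

lemma disj: "X0 \<inter> X1 = {}" "X0 \<inter> X2 = {}" "X1 \<inter> X2 = {}"
proof -
  show "X0 \<inter> X1 = {}" using disj_gen[OF inT(1) inT(2)] d01 by blast
  show "X0 \<inter> X2 = {}" using disj_gen[OF inT(1) inT(3)] d02 by blast
  show "X1 \<inter> X2 = {}" using disj_gen[OF inT(2) inT(3)] d12 by blast
qed

lemma cross: "\<forall>u\<in>X0. \<forall>v\<in>X1. {u,v} \<in> E" "\<forall>u\<in>X0. \<forall>v\<in>X2. {u,v} \<in> E"
  "\<forall>u\<in>X1. \<forall>v\<in>X2. {u,v} \<in> E"
  using class_cross[OF g inT(1) inT(2) d01 e01] class_cross[OF g inT(1) inT(3) d02 e02]
    class_cross[OF g inT(2) inT(3) d12 e12] by auto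

lemma card_ge: "card X0 \<ge> 1" "card X1 \<ge> 2" "card X2 \<ge> 2"
proof -
  show "card X0 \<ge> 1" using fin ne by (simp add: Suc_le_eq card_gt_0_iff)
  have "card X1 \<noteq> 1" "card X2 \<noteq> 1" using n1 n2 unfolding type_1K_def by auto
  moreover have "card X1 \<ge> 1" "card X2 \<ge> 1" using fin ne by (simp_all add: Suc_le_eq card_gt_0_iff)
  ultimately show "card X1 \<ge> 2" "card X2 \<ge> 2" by auto
qed

lemma edgeless: "\<forall>u\<in>X1. \<forall>v\<in>X1. {u,v} \<notin> E" "\<forall>u\<in>X2. \<forall>v\<in>X2. {u,v} \<notin> E"
proof -
  have "\<not> is_clique E X1" "\<not> is_clique E X2" using n1 n2 card_ge unfolding type_1K_def by auto
  thus "\<forall>u\<in>X1. \<forall>v\<in>X1. {u,v} \<notin> E" "\<forall>u\<in>X2. \<forall>v\<in>X2. {u,v} \<notin> E"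
    using class_dich[OF g inT(2)] class_dich[OF g inT(3)] by blast+
qed

lemma cardV: "card V = card X0 + card X1 + card X2"
  using Vun disj fin by (simp add: card_Un_disjoint Int_Un_distrib2)

definition p :: "'a \<Rightarrow> nat" where
  "p v = (if v \<in> X0 then 0 else if v \<in> X1 then 1 else 2)"

lemma p_vals: "x \<in> X0 \<Longrightarrow> p x = 0" "x \<in> X1 \<Longrightarrow> p x = 1" "x \<in> X2 \<Longrightarrow> p x = 2"
  using disj unfolding p_def by auto

lemma edge_char:
  assumes Q: "\<forall>u\<in>X0. \<forall>v\<in>X0. {u,v} \<notin> E" and u: "u \<in> V" and v: "v \<in> V"
  shows "{u,v} \<in> E \<longleftrightarrow> p u \<noteq> p v"
proof -
  have uu: "u \<in> X0 \<or> u \<in> X1 \<or> u \<in> X2" "v \<in> X0 \<or> v \<in> X1 \<or> v \<in> X2" using u v Vun by auto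
  have c: "\<forall>u\<in>X1. \<forall>v\<in>X0. {u,v} \<in> E" "\<forall>u\<in>X2. \<forall>v\<in>X0. {u,v} \<in> E"
    "\<forall>u\<in>X2. \<forall>v\<in>X1. {u,v} \<in> E" using cross by (metis insert_commute)+
  show ?thesis
    using uu Q edgeless cross c
    by (elim disjE) (simp_all add: p_vals)
qed

end

lemma shift_ineq:
  assumes "a \<ge> 1" "b \<ge> 2" "(c::nat) \<ge> 2" "\<not>(a=1\<and>b=2\<and>c=2)" "\<not>(a=2\<and>b=2\<and>c=2)"
  shows "\<exists>s0 s1 s2::nat. s0 \<noteq> s1 \<and> s0 \<noteq> s2 \<and> s1 \<noteq> s2 \<and> a + s0 \<le> a+b+c-3 \<and> b + s1 \<le> a+b+c-3 \<and> c + s2 \<le> a+b+c-3"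
  using assms by presburger

lemma shift_img: "(+) (s::nat) ` {..<n} = {s..<n + s}"
  using image_add_atLeastLessThan[of s 0 n] by (simp add: atLeast0LessThan add.commute)

lemma shift_ne:
  assumes "(n::nat) \<ge> 1" "m \<ge> 1" "s \<noteq> t"
  shows "(+) s ` {..<n} \<noteq> (+) t ` {..<m}"
  unfolding shift_img using atLeastLessThan_eq_iff[of s "n+s" t "m+t"] assms by auto

context K3 begin

lemma col_exists_c:
  fixes g0 g1 g2 :: "nat \<Rightarrow> nat"
  assumes i0: "inj_on g0 {..<card X0}" and i1: "inj_on g1 {..<card X1}" and i2: "inj_on g2 {..<card X2}"
    and r0: "g0 ` {..<card X0} \<subseteq> {..<k}" and r1: "g1 ` {..<card X1} \<subseteq> {..<k}"
    and r2: "g2 ` {..<card X2} \<subseteq> {..<k}"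
    and n01: "g0 ` {..<card X0} \<noteq> g1 ` {..<card X1}"
    and n02: "g0 ` {..<card X0} \<noteq> g2 ` {..<card X2}"
    and n12: "g1 ` {..<card X1} \<noteq> g2 ` {..<card X2}"
  shows "\<exists>c. distinguishing V E k c"
proof -
  obtain e0 where e0: "bij_betw e0 X0 {..<card X0}" using ex_bij_betw_finite_nat[OF fin(1)] atLeast0LessThan by auto
  obtain e1 where e1: "bij_betw e1 X1 {..<card X1}" using ex_bij_betw_finite_nat[OF fin(2)] atLeast0LessThan by auto
  obtain e2 where e2: "bij_betw e2 X2 {..<card X2}" using ex_bij_betw_finite_nat[OF fin(3)] atLeast0LessThan by auto
  define c where "c v = (if v \<in> X0 then g0 (e0 v) else if v \<in> X1 then g1 (e1 v) else g2 (e2 v))" for v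
  have D: "\<And>x. x \<in> X1 \<Longrightarrow> x \<notin> X0" "\<And>x. x \<in> X2 \<Longrightarrow> x \<notin> X0" "\<And>x. x \<in> X2 \<Longrightarrow> x \<notin> X1"
    using disj by auto
  have c0: "\<forall>v\<in>X0. c v = (g0 \<circ> e0) v" unfolding c_def by auto
  have c1: "\<forall>v\<in>X1. c v = (g1 \<circ> e1) v" unfolding c_def using D by auto
  have c2: "\<forall>v\<in>X2. c v = (g2 \<circ> e2) v" unfolding c_def using D by auto
  have im0: "c ` X0 = g0 ` {..<card X0}"
  proof -
    have "c ` X0 = (g0 \<circ> e0) ` X0" by (rule image_cong[OF refl]) (use c0 in auto)
    thus ?thesis using e0 unfolding bij_betw_def by (metis image_comp)
  qed
  have im1: "c ` X1 = g1 ` {..<card X1}"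
  proof -
    have "c ` X1 = (g1 \<circ> e1) ` X1" by (rule image_cong[OF refl]) (use c1 in auto)
    thus ?thesis using e1 unfolding bij_betw_def by (metis image_comp)
  qed
  have im2: "c ` X2 = g2 ` {..<card X2}"
  proof -
    have "c ` X2 = (g2 \<circ> e2) ` X2" by (rule image_cong[OF refl]) (use c2 in auto)
    thus ?thesis using e2 unfolding bij_betw_def by (metis image_comp)
  qed
  have j0: "inj_on c X0"
  proof -
    have "inj_on (g0 \<circ> e0) X0" using comp_inj_on[of e0 X0 g0] e0 i0 unfolding bij_betw_def by auto
    thus ?thesis using inj_on_cong[of X0 c "g0 \<circ> e0"] c0 by auto
  qed
  have j1: "inj_on c X1"
  proof -
    have "inj_on (g1 \<circ> e1) X1" using comp_inj_on[of e1 X1 g1] e1 i1 unfolding bij_betw_def by auto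
    thus ?thesis using inj_on_cong[of X1 c "g1 \<circ> e1"] c1 by auto
  qed
  have j2: "inj_on c X2"
  proof -
    have "inj_on (g2 \<circ> e2) X2" using comp_inj_on[of e2 X2 g2] e2 i2 unfolding bij_betw_def by auto
    thus ?thesis using inj_on_cong[of X2 c "g2 \<circ> e2"] c2 by auto
  qed
  have "distinguishing V E k c"
  proof (rule GL[OF g])
    show "c ` V \<subseteq> {..<k}" unfolding Vun image_Un im0 im1 im2 using r0 r1 r2 by blast
    show "\<forall>X\<in>twin_classes V E. inj_on c X" unfolding T using j0 j1 j2 by auto
    show "\<forall>X\<in>twin_classes V E. \<forall>Y\<in>twin_classes V E. c ` X = c ` Y \<longrightarrow> X = Y"
      unfolding T using im0 im1 im2 n01 n02 n12 by auto
  qed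
  thus ?thesis by blast
qed

lemma dist_le: "\<exists>c. distinguishing V E k c \<Longrightarrow> dist_num V E \<le> k"
  unfolding dist_num_def by (rule Least_le)

lemmas col_exists = col_exists_c[THEN dist_le]

lemma upper:
  assumes "\<not> (card X0 = 1 \<and> card X1 = 2 \<and> card X2 = 2)"
  shows "dist_num V E \<le> card V - 3"
proof (cases "card X0 = 2 \<and> card X1 = 2 \<and> card X2 = 2")
  case True
  have L: "{..<2::nat} = {0,1}" by auto
  have "dist_num V E \<le> 3"
    by (rule col_exists[of "\<lambda>j. j mod 3" "\<lambda>j. (j+1) mod 3" "\<lambda>j. (j+2) mod 3"])
       (simp_all add: True L inj_on_def doubleton_eq_iff)
  thus ?thesis using True cardV by simp
next
  case False
  obtain s0 s1 s2 where s: "s0 \<noteq> s1" "s0 \<noteq> s2" "s1 \<noteq> s2"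
    "card X0 + s0 \<le> card V - 3" "card X1 + s1 \<le> card V - 3" "card X2 + s2 \<le> card V - 3"
    using shift_ineq[OF card_ge assms False] unfolding cardV by blast
  show ?thesis
    by (rule col_exists[of "(+) s0" "(+) s1" "(+) s2"])
       (use s card_ge in \<open>auto simp: shift_ne\<close>)
qed

end

lemma Ktri_edge:
  "a \<in> Ktri_V A B C \<Longrightarrow> b \<in> Ktri_V A B C \<Longrightarrow> ({a,b} \<in> Ktri_E A B C) = (tri_part A B a \<noteq> tri_part A B b)"
  unfolding Ktri_E_def by (auto simp: doubleton_eq_iff)

context K3 begin

lemma aut_by_p:
  assumes Q: "\<forall>u\<in>X0. \<forall>v\<in>X0. {u,v} \<notin> E"
    and inv: "\<forall>v\<in>V. f v \<in> V \<and> f (f v) = v" and pi: "inj (\<pi>::nat \<Rightarrow> nat)"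
    and pp: "\<forall>u\<in>V. p (f u) = \<pi> (p u)"
  shows "automorphism V E f"
  unfolding automorphism_def
proof (intro conjI ballI)
  show "bij_betw f V V" by (rule bij_betw_byWitness[where f' = f]) (use inv in auto)
  fix u v assume u: "u \<in> V" and v: "v \<in> V"
  have "({f u, f v} \<in> E) = (p (f u) \<noteq> p (f v))" using edge_char[OF Q] inv u v by auto
  also have "\<dots> = (p u \<noteq> p v)" using pp u v pi by (auto dest: injD)
  also have "\<dots> = ({u,v} \<in> E)" using edge_char[OF Q u v] by simp
  finally show "({u, v} \<in> E) = ({f u, f v} \<in> E)" by simp
qed

lemma swap_contra:
  assumes Q: "\<forall>u\<in>X0. \<forall>v\<in>X0. {u,v} \<notin> E"
    and inv: "\<forall>v\<in>V. f v \<in> V \<and> f (f v) = v" and pi: "inj (\<pi>::nat \<Rightarrow> nat)"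
    and pp: "\<forall>u\<in>V. p (f u) = \<pi> (p u)"
    and col: "\<forall>v\<in>V. c (f v) = c v" and w: "w \<in> V" "f w \<noteq> w"
    and d: "distinguishing V E k c"
  shows False
  using d aut_by_p[OF Q inv pi pp] col w unfolding distinguishing_def by blast

lemma K122_struct:
  assumes S: "card X0 = 1 \<and> card X1 = 2 \<and> card X2 = 2"
  obtains z x x' y y' where "X0 = {z}" "X1 = {x,x'}" "X2 = {y,y'}"
    "x \<noteq> x'" "y \<noteq> y'" "z \<noteq> x" "z \<noteq> x'" "z \<noteq> y" "z \<noteq> y'"
    "x \<noteq> y" "x \<noteq> y'" "x' \<noteq> y" "x' \<noteq> y'"
    "V = {z,x,x',y,y'}" "\<forall>u\<in>X0. \<forall>v\<in>X0. {u,v} \<notin> E"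
proof -
  obtain z where z: "X0 = {z}" using S card_1_singleton_iff[of X0] by auto
  obtain x x' where x: "X1 = {x,x'}" "x \<noteq> x'" using S card_2_iff[of X1] by auto
  obtain y y' where y: "X2 = {y,y'}" "y \<noteq> y'" using S card_2_iff[of X2] by auto
  have Q: "\<forall>u\<in>X0. \<forall>v\<in>X0. {u,v} \<notin> E" using z no_loop[OF g] by auto
  show ?thesis
    apply (rule that[OF z x(1) y(1) x(2) y(2) _ _ _ _ _ _ _ _ _ Q])
    using disj z x y Vun by auto
qed

lemma lower:
  assumes S: "card X0 = 1 \<and> card X1 = 2 \<and> card X2 = 2" and d: "distinguishing V E k c"
  shows "3 \<le> k"
proof (rule ccontr)
  assume "\<not> 3 \<le> k"
  hence cv: "\<forall>v\<in>V. c v < 2" using d unfolding distinguishing_def by auto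
  obtain z x x' y y' where st: "X0 = {z}" "X1 = {x,x'}" "X2 = {y,y'}"
    "x \<noteq> x'" "y \<noteq> y'" "z \<noteq> x" "z \<noteq> x'" "z \<noteq> y" "z \<noteq> y'"
    "x \<noteq> y" "x \<noteq> y'" "x' \<noteq> y" "x' \<noteq> y'"
    and VV: "V = {z,x,x',y,y'}" and Q: "\<forall>u\<in>X0. \<forall>v\<in>X0. {u,v} \<notin> E"
    by (rule K122_struct[OF S])
  have pz: "p z = 0" and px: "p x = 1" "p x' = 1" and py: "p y = 2" "p y' = 2"
    using p_vals st by auto
  have iid: "inj (id::nat \<Rightarrow> nat)" by simp
  define \<pi> :: "nat \<Rightarrow> nat" where "\<pi> i = (if i = 1 then 2 else if i = 2 then 1 else i)" for i
  have ipi: "inj \<pi>" unfolding \<pi>_def inj_def by auto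
  have cs: "c x < 2" "c x' < 2" "c y < 2" "c y' < 2" using cv VV by auto
  show False
  proof (cases "c x = c x'")
    case True
    define f where "f v = (if v = x then x' else if v = x' then x else v)" for v
    show False
      by (rule swap_contra[OF Q _ iid _ _ _ _ d, of f x])
        (use st VV pz px py True in \<open>auto simp: f_def\<close>)
  next
    case nx: False
    show False
    proof (cases "c y = c y'")
      case True
      define f where "f v = (if v = y then y' else if v = y' then y else v)" for v
      show False
        by (rule swap_contra[OF Q _ iid _ _ _ _ d, of f y])
          (use st VV pz px py True in \<open>auto simp: f_def\<close>)
    next
      case ny: False
      have "(c y = c x \<and> c y' = c x') \<or> (c y = c x' \<and> c y' = c x)" using cs nx ny by auto
      thus False
      proof
        assume cc: "c y = c x \<and> c y' = c x'"
        define f where "f v = (if v = x then y else if v = y then x else if v = x' then y'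
           else if v = y' then x' else v)" for v
        show False
          by (rule swap_contra[OF Q _ ipi _ _ _ _ d, of f x])
            (use st VV pz px py cc in \<open>auto simp: f_def \<pi>_def\<close>)
      next
        assume cc: "c y = c x' \<and> c y' = c x"
        define f where "f v = (if v = x then y' else if v = y' then x else if v = x' then y
           else if v = y then x' else v)" for v
        show False
          by (rule swap_contra[OF Q _ ipi _ _ _ _ d, of f x])
            (use st VV pz px py cc in \<open>auto simp: f_def \<pi>_def\<close>)
      qed
    qed
  qed
qed

lemma dist_K122:
  assumes S: "card X0 = 1 \<and> card X1 = 2 \<and> card X2 = 2"
  shows "dist_num V E = 3"
  unfolding dist_num_def
proof (rule Least_equality)
  show "\<exists>c. distinguishing V E 3 c"
  proof (rule col_exists_c[of "(+) 2" "(+) 0" "(+) 1"])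
    show "(+) 2 ` {..<card X0} \<noteq> (+) 0 ` {..<card X1}" by (rule shift_ne) (use S in auto)
    show "(+) 2 ` {..<card X0} \<noteq> (+) 1 ` {..<card X2}" by (rule shift_ne) (use S in auto)
    show "(+) 0 ` {..<card X1} \<noteq> (+) 1 ` {..<card X2}" by (rule shift_ne) (use S in auto)
  qed (use S in auto)
  show "\<And>y. \<exists>c. distinguishing V E y c \<Longrightarrow> 3 \<le> y" using lower[OF S] by blast
qed

lemma iso_K122:
  assumes S: "card X0 = 1 \<and> card X1 = 2 \<and> card X2 = 2"
  shows "graph_iso V E (Ktri_V 1 2 2) (Ktri_E 1 2 2)"
proof -
  obtain z x x' y y' where st: "X0 = {z}" "X1 = {x,x'}" "X2 = {y,y'}"
    "x \<noteq> x'" "y \<noteq> y'" "z \<noteq> x" "z \<noteq> x'" "z \<noteq> y" "z \<noteq> y'"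
    "x \<noteq> y" "x \<noteq> y'" "x' \<noteq> y" "x' \<noteq> y'"
    and VV: "V = {z,x,x',y,y'}" and Q: "\<forall>u\<in>X0. \<forall>v\<in>X0. {u,v} \<notin> E"
    by (rule K122_struct[OF S])
  have pz: "p z = 0" and px: "p x = 1" "p x' = 1" and py: "p y = 2" "p y' = 2"
    using p_vals st by auto
  have KV: "Ktri_V 1 2 2 = {0,1,2,3,4}" unfolding Ktri_V_def by auto
  define f where "f v = (if v = z then 0 else if v = x then 1 else if v = x' then 2
      else if v = y then 3 else (4::nat))" for v
  define h where "h i = (if i = (0::nat) then z else if i = 1 then x else if i = 2 then x'
      else if i = 3 then y else y')" for i
  have b0: "bij_betw f V {0,1,2,3,4}"
    by (rule bij_betw_byWitness[where f' = h]) (use st in \<open>auto simp: VV f_def h_def\<close>)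
  have b: "bij_betw f V (Ktri_V 1 2 2)" unfolding KV by (rule b0)
  have tp: "\<forall>u\<in>V. tri_part 1 2 (f u) = p u"
    using st pz px py unfolding VV by (auto simp: f_def tri_part_def)
  have fV: "\<forall>u\<in>V. f u \<in> Ktri_V 1 2 2" using b unfolding bij_betw_def by auto
  show ?thesis unfolding graph_iso_def
  proof (intro exI conjI ballI)
    show "bij_betw f V (Ktri_V 1 2 2)" by (rule b)
    fix u v assume u: "u \<in> V" and v: "v \<in> V"
    show "({u, v} \<in> E) = ({f u, f v} \<in> Ktri_E 1 2 2)"
      using edge_char[OF Q u v] Ktri_edge[of "f u" 1 2 2 "f v"] fV tp u v by auto
  qed
qed

lemma iso_K122_imp:
  assumes "graph_iso V E (Ktri_V 1 2 2) (Ktri_E 1 2 2)"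
  shows "card X0 = 1 \<and> card X1 = 2 \<and> card X2 = 2"
proof -
  obtain f where "bij_betw f V (Ktri_V 1 2 2)" using assms unfolding graph_iso_def by auto
  hence "card V = 5" using bij_betw_same_card unfolding Ktri_V_def by fastforce
  thus ?thesis using cardV card_ge by auto
qed

lemma two_elems:
  assumes "finite X" "card X \<ge> 2" obtains x x' where "x \<in> X" "x' \<in> X" "x \<noteq> x'"
proof -
  obtain x where x: "x \<in> X" using assms by fastforce
  have "X - {x} \<noteq> {}"
  proof
    assume "X - {x} = {}"
    hence "X \<subseteq> {x}" by auto
    hence "card X \<le> 1" using card_mono[of "{x}" X] by auto
    thus False using assms by auto
  qed
  then obtain x' where "x' \<in> X - {x}" by auto
  thus ?thesis using that x by auto
qed

lemma no_K11t:
  assumes t: "t \<ge> 2"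
  shows "\<not> graph_iso V E (Ktri_V 1 1 t) (Ktri_E 1 1 t)"
proof
  assume "graph_iso V E (Ktri_V 1 1 t) (Ktri_E 1 1 t)"
  then obtain f where b: "bij_betw f V (Ktri_V 1 1 t)"
    and e: "\<forall>u\<in>V. \<forall>v\<in>V. {u, v} \<in> E \<longleftrightarrow> {f u, f v} \<in> Ktri_E 1 1 t"
    unfolding graph_iso_def by auto
  have inj: "inj_on f V" and fV: "\<forall>u\<in>V. f u \<in> Ktri_V 1 1 t" using b unfolding bij_betw_def by auto
  have big: "f u \<ge> 2" if u: "u \<in> V" "u' \<in> V" "u \<noteq> u'" "{u,u'} \<notin> E" for u u'
  proof -
    have "f u \<noteq> f u'" using inj u by (auto dest: inj_onD)
    moreover have "tri_part 1 1 (f u) = tri_part 1 1 (f u')"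
      using e u Ktri_edge[of "f u" 1 1 t "f u'"] fV by auto
    ultimately show ?thesis unfolding tri_part_def by (auto split: if_splits)
  qed
  obtain x x' where x: "x \<in> X1" "x' \<in> X1" "x \<noteq> x'" using two_elems[OF fin(2) card_ge(2)] by blast
  obtain y y' where y: "y \<in> X2" "y' \<in> X2" "y \<noteq> y'" using two_elems[OF fin(3) card_ge(3)] by blast
  have fx: "f x \<ge> 2" using big[of x x'] x sub edgeless by auto
  have fy: "f y \<ge> 2" using big[of y y'] y sub edgeless by auto
  have xy: "{x,y} \<in> E" using cross(3) x y by auto
  have xyV: "x \<in> V" "y \<in> V" using sub x y by auto
  have "{f x, f y} \<in> Ktri_E 1 1 t" using e xy xyV by blast
  hence "tri_part 1 1 (f x) \<noteq> tri_part 1 1 (f y)" using Ktri_edge[of "f x" 1 1 t "f y"] fV xyV by auto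
  with fx fy show False unfolding tri_part_def by auto
qed

theorem main:
  "dist_num V E = card V - 2 \<longleftrightarrow>
         (graph_iso V E (Ktri_V 1 2 2) (Ktri_E 1 2 2) \<or>
          (\<exists>t\<ge>2. graph_iso V E (Ktri_V 1 1 t) (Ktri_E 1 1 t)))"
proof (cases "card X0 = 1 \<and> card X1 = 2 \<and> card X2 = 2")
  case True
  thus ?thesis using dist_K122 iso_K122 cardV by auto
next
  case False
  have "dist_num V E \<le> card V - 3" using upper[OF False] .
  moreover have "card V \<ge> 5" using cardV card_ge by auto
  ultimately show ?thesis using iso_K122_imp False no_K11t by auto
qed

end

lemma main_gen:
  assumes "graph V E" "twin_classes V E = {X0,X1,X2}" "X0 \<noteq> X1" "X0 \<noteq> X2" "X1 \<noteq> X2"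
    "\<exists>u\<in>X0. \<exists>v\<in>X1. {u,v} \<in> E" "\<exists>u\<in>X0. \<exists>v\<in>X2. {u,v} \<in> E" "\<exists>u\<in>X1. \<exists>v\<in>X2. {u,v} \<in> E"
    "\<not> type_1K E X1" "\<not> type_1K E X2"
  shows "dist_num V E = card V - 2 \<longleftrightarrow>
         (graph_iso V E (Ktri_V 1 2 2) (Ktri_E 1 2 2) \<or>
          (\<exists>t\<ge>2. graph_iso V E (Ktri_V 1 1 t) (Ktri_E 1 1 t)))"
proof -
  interpret K3 V E X0 X1 X2 using assms by unfold_locales
  show ?thesis by (rule main)
qed

lemma adj_sym: "\<exists>u\<in>X. \<exists>v\<in>Y. {u,v} \<in> E \<Longrightarrow> \<exists>u\<in>Y. \<exists>v\<in>X. {u,v} \<in> E"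
  by (metis insert_commute)

theorem lemma4p5:
  fixes V :: "'a set" and E :: "'a set set"
  assumes "graph V E"
    and "graph_iso (twin_classes V E) (twin_edges V E) K3_V K3_E"
    and "card {C \<in> twin_classes V E. type_1K E C} \<le> 1"
  shows "dist_num V E = card V - 2 \<longleftrightarrow>
         (graph_iso V E (Ktri_V 1 2 2) (Ktri_E 1 2 2) \<or>
          (\<exists>t\<ge>2. graph_iso V E (Ktri_V 1 1 t) (Ktri_E 1 1 t)))"
proof -
  define T where "T = twin_classes V E"
  obtain f where b: "bij_betw f T K3_V"
    and e: "\<forall>u\<in>T. \<forall>v\<in>T. {u, v} \<in> twin_edges V E \<longleftrightarrow> {f u, f v} \<in> K3_E"
    using assms(2) unfolding graph_iso_def T_def by auto
  define Y where "Y i = inv_into T f i" for i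
  have K3V: "K3_V = {0,1,2}" by (simp add: K3_V_def)
  have YT: "Y i \<in> T" and fY: "f (Y i) = i" if "i \<in> K3_V" for i
  proof -
    have im: "f ` T = K3_V" using b by (simp add: bij_betw_def)
    show "Y i \<in> T" unfolding Y_def by (rule inv_into_into) (simp add: im that)
    show "f (Y i) = i" unfolding Y_def by (rule f_inv_into_f) (simp add: im that)
  qed
  have Tset: "T = {Y 0, Y 1, Y 2}"
  proof
    show "T \<subseteq> {Y 0, Y 1, Y 2}"
    proof
      fix X assume X: "X \<in> T"
      have inj: "inj_on f T" and im: "f ` T = K3_V" using b by (auto simp: bij_betw_def)
      have "f X \<in> K3_V" using im X by blast
      hence d: "f X = 0 \<or> f X = 1 \<or> f X = 2" unfolding K3V by simp
      have yx: "Y (f X) = X" unfolding Y_def by (rule inv_into_f_f[OF inj X])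
      from d show "X \<in> {Y 0, Y 1, Y 2}"
      proof (elim disjE)
        assume "f X = 0" thus ?thesis using yx by (metis insertCI)
      next
        assume "f X = 1" thus ?thesis using yx by (metis insertCI)
      next
        assume "f X = 2" thus ?thesis using yx by (metis insertCI)
      qed
    qed
    show "{Y 0, Y 1, Y 2} \<subseteq> T" using YT K3V by auto
  qed
  have f012: "f (Y 0) = 0" "f (Y 1) = 1" "f (Y 2) = 2" using fY K3V by auto
  have dY: "Y 0 \<noteq> Y 1" "Y 0 \<noteq> Y 2" "Y 1 \<noteq> Y 2"
  proof -
    show "Y 0 \<noteq> Y 1" using f012(1,2) by (metis zero_neq_one)
    show "Y 0 \<noteq> Y 2" using f012(1,3) by (metis zero_neq_numeral)
    show "Y 1 \<noteq> Y 2" using f012(2,3) by force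
  qed
  have adj: "\<exists>u\<in>Y i. \<exists>v\<in>Y j. {u,v} \<in> E" if ij: "i \<in> K3_V" "j \<in> K3_V" "i \<noteq> j" for i j
  proof -
    have fi: "f (Y i) = i" "f (Y j) = j" using fY ij by auto
    have "{i, j} \<in> K3_E" unfolding K3_E_def using ij by blast
    hence "{f (Y i), f (Y j)} \<in> K3_E" by (simp only: fi)
    moreover have Yi: "Y i \<in> T" and Yj: "Y j \<in> T" using YT ij by auto
    ultimately have "{Y i, Y j} \<in> twin_edges V E" using bspec[OF bspec[OF e Yi] Yj] by simp
    hence "\<exists>C D. {Y i, Y j} = {C,D} \<and> C \<in> twin_classes V E \<and> D \<in> twin_classes V E \<and> C \<noteq> D \<and>
       (\<exists>u\<in>C. \<exists>v\<in>D. {u, v} \<in> E)"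
      by (simp only: twin_edges_def mem_Collect_eq)
    then obtain C where "\<exists>D. {Y i, Y j} = {C,D} \<and> C \<in> twin_classes V E \<and> D \<in> twin_classes V E \<and> C \<noteq> D \<and>
       (\<exists>u\<in>C. \<exists>v\<in>D. {u, v} \<in> E)" ..
    then obtain D where DD: "{Y i, Y j} = {C,D} \<and> C \<in> twin_classes V E \<and> D \<in> twin_classes V E \<and> C \<noteq> D \<and>
       (\<exists>u\<in>C. \<exists>v\<in>D. {u, v} \<in> E)" ..
    have CD1: "{Y i, Y j} = {C,D}" using DD by (rule conjunct1)
    have CD2: "\<exists>u\<in>C. \<exists>v\<in>D. {u, v} \<in> E" using DD by (elim conjE)
    note CD = CD1 CD2
    from CD(1) have "(Y i = C \<and> Y j = D) \<or> (Y i = D \<and> Y j = C)" by (simp add: doubleton_eq_iff)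
    thus ?thesis
    proof
      assume "Y i = C \<and> Y j = D" thus ?thesis using CD(2) by simp
    next
      assume "Y i = D \<and> Y j = C" thus ?thesis using adj_sym[OF CD(2)] by simp
    qed
  qed
  have a01: "\<exists>u\<in>Y 0. \<exists>v\<in>Y 1. {u,v} \<in> E" and a02: "\<exists>u\<in>Y 0. \<exists>v\<in>Y 2. {u,v} \<in> E"
    and a12: "\<exists>u\<in>Y 1. \<exists>v\<in>Y 2. {u,v} \<in> E"
    using adj[of 0 1] adj[of 0 2] adj[of 1 2] unfolding K3V by simp_all
  have finT: "finite T" using Tset by simp
  have atmost: False if "type_1K E X" "type_1K E Z" "X \<in> T" "Z \<in> T" "X \<noteq> Z" for X Z
  proof -
    have "{X, Z} \<subseteq> {C \<in> T. type_1K E C}" using that by auto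
    hence "card {X,Z} \<le> card {C \<in> T. type_1K E C}" using finT by (intro card_mono) auto
    moreover have "card {X,Z} = 2" using that(5) by simp
    ultimately show False using assms(3) unfolding T_def by linarith
  qed
  have TT: "twin_classes V E = {Y 0, Y 1, Y 2}" using Tset T_def by simp
  have YTs: "Y 0 \<in> T" "Y 1 \<in> T" "Y 2 \<in> T" using Tset by auto
  consider "\<not> type_1K E (Y 1) \<and> \<not> type_1K E (Y 2)" | "\<not> type_1K E (Y 0) \<and> \<not> type_1K E (Y 2)"
    | "\<not> type_1K E (Y 0) \<and> \<not> type_1K E (Y 1)"
    using atmost[OF _ _ YTs(1) YTs(2) dY(1)] atmost[OF _ _ YTs(1) YTs(3) dY(2)]
      atmost[OF _ _ YTs(2) YTs(3) dY(3)] by blast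
  thus ?thesis
  proof cases
    case 1 show ?thesis by (rule main_gen[OF assms(1) TT dY a01 a02 a12]) (use 1 in auto)
  next
    case 2
    have TT': "twin_classes V E = {Y 1, Y 0, Y 2}" using TT by (simp add: insert_commute)
    show ?thesis
      by (rule main_gen[OF assms(1) TT' dY(1)[symmetric] dY(3) dY(2) adj_sym[OF a01] a12 a02]) (use 2 in auto)
  next
    case 3
    have TT': "twin_classes V E = {Y 2, Y 0, Y 1}" using TT by (auto simp: insert_commute)
    show ?thesis
      by (rule main_gen[OF assms(1) TT' dY(2)[symmetric] dY(3)[symmetric] dY(1) adj_sym[OF a02] adj_sym[OF a12] a01])
        (use 3 in auto)
  qed
qed


end
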